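(* Let $d\ge 1$, $1\le r\le d$, and let $S(\cdot; r, d):\mathbb{R}^d\to\mathbb{R}$ be $S(x;r,d)=\frac{1}{\binom dr}\sum_{j=1}^{\binom dr} s(x;C(j,r,d))$. If $f_1,\dots,f_K$ is any order-$r$ functional decomposition of $S(\cdot; r, d)$, then $K \ge \binom{d}{r}$.
   Context: For $x\in\mathbb{R}^d$ and nonempty $A\subseteq\{1,\dots,d\}$, $s(x;A)=\max\{x_j:j\in A\}$; $C(k,r,d)$ is the $k$-th $r$-element subset of $\{1,\dots,d\}$ in lexicographic order. A function $f:\mathbb{R}^d\to\mathbb{R}$ has an order-$r$ functional decomposition $f_1,\dots,f_K$ if $f=\sum_{k=1}^K f_k$ and each $f_k:\mathbb{R}^d\to\mathbb{R}$ is a function of only $r$ of the coordinates (i.e. depends only on the coordinates indexed by some $r$-element subset of $\{1,\dots,d\}$). *)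

theory Defs
  imports Complex_Main "HOL-Library.List_Lexorder"
begin

text \<open>Points of R^d are modelled as functions nat => real; only the coordinates
  1..d are relevant (all functions below ignore the other coordinates).\<close>

definition smax :: "(nat \<Rightarrow> real) \<Rightarrow> nat set \<Rightarrow> real" where
  "smax x A = Max (x ` A)"

definition subsets_lex :: "nat \<Rightarrow> nat \<Rightarrow> nat list list" where
  "subsets_lex r d =
     sorted_list_of_set (sorted_list_of_set ` {A. A \<subseteq> {1..d} \<and> card A = r})"

definition C :: "nat \<Rightarrow> nat \<Rightarrow> nat \<Rightarrow> nat set" where
  "C k r d = set (subsets_lex r d ! (k - 1))"

definition S :: "(nat \<Rightarrow> real) \<Rightarrow> nat \<Rightarrow> nat \<Rightarrow> real" where
  "S x r d = (1 / real (d choose r)) * (\<Sum>j = 1..(d choose r). smax x (C j r d))"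

definition depends_only_on :: "((nat \<Rightarrow> real) \<Rightarrow> real) \<Rightarrow> nat set \<Rightarrow> bool" where
  "depends_only_on g A \<longleftrightarrow> (\<forall>x y. (\<forall>i\<in>A. x i = y i) \<longrightarrow> g x = g y)"

definition order_r_decomposition ::
  "nat \<Rightarrow> nat \<Rightarrow> ((nat \<Rightarrow> real) \<Rightarrow> real) \<Rightarrow> (nat \<Rightarrow> (nat \<Rightarrow> real) \<Rightarrow> real) \<Rightarrow> nat \<Rightarrow> bool" where
  "order_r_decomposition r d F f K \<longleftrightarrow>
     (\<forall>x. F x = (\<Sum>k = 1..K. f k x)) \<and>
     (\<forall>k \<in> {1..K}. \<exists>A. A \<subseteq> {1..d} \<and> card A = r \<and> depends_only_on (f k) A)"

end

theory Submission
  imports Defs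
begin

definition pt :: "nat set \<Rightarrow> nat \<Rightarrow> real" where
  "pt T = (\<lambda>i. if i \<in> T then 1 else 0)"

definition DD :: "((nat \<Rightarrow> real) \<Rightarrow> real) \<Rightarrow> nat set \<Rightarrow> real" where
  "DD g A = (\<Sum>T \<in> Pow A. (-1) ^ card T * g (pt T))"

lemma DD_zero:
  assumes "finite A" "i \<in> A" "i \<notin> B" "depends_only_on g B"
  shows "DD g A = 0"
proof -
  define A0 where "A0 = A - {i}"
  have A: "A = insert i A0" and fin: "finite A0" and ni: "i \<notin> A0"
    using assms A0_def by auto
  have disj: "Pow A0 \<inter> insert i ` Pow A0 = {}" using ni by auto
  have inj: "inj_on (insert i) (Pow A0)" using ni
    unfolding inj_on_def by (metis PowD Diff_insert_absorb subsetD)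
  have "DD g A = (\<Sum>T \<in> Pow A0. (-1) ^ card T * g (pt T)) +
                 (\<Sum>T \<in> insert i ` Pow A0. (-1) ^ card T * g (pt T))"
    unfolding DD_def A Pow_insert using fin disj by (simp add: sum.union_disjoint)
  also have "(\<Sum>T \<in> insert i ` Pow A0. (-1) ^ card T * g (pt T))
      = (\<Sum>T \<in> Pow A0. (-1) ^ card (insert i T) * g (pt (insert i T)))"
    using inj by (simp add: sum.reindex)
  also have "\<dots> = (\<Sum>T \<in> Pow A0. - ((-1) ^ card T * g (pt T)))"
  proof (rule sum.cong)
    fix T assume T: "T \<in> Pow A0"
    have fT: "finite T" using T fin finite_subset by auto
    have iT: "i \<notin> T" using T ni by auto
    have "g (pt (insert i T)) = g (pt T)"
      using assms(3,4) unfolding depends_only_on_def pt_def by auto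
    then show "(-1) ^ card (insert i T) * g (pt (insert i T)) = - ((-1) ^ card T * g (pt T))"
      using fT iT by simp
  qed simp
  finally show ?thesis by (simp add: sum_negf)
qed

lemma DD_sum: "DD (\<lambda>x. \<Sum>k\<in>I. f k x) A = (\<Sum>k\<in>I. DD (f k) A)"
  unfolding DD_def by (simp add: sum_distrib_left sum.swap[of _ I])

lemma DD_cmult: "DD (\<lambda>x. c * g x) A = c * DD g A"
  unfolding DD_def by (simp add: sum_distrib_left mult.left_commute)

lemma smax_dep: "depends_only_on (\<lambda>x. smax x A) A"
  unfolding depends_only_on_def smax_def
  by (metis image_cong)

lemma DD_smax_self:
  assumes "finite A" "A \<noteq> {}"
  shows "DD (\<lambda>x. smax x A) A = -1"
proof -
  have c: "DD (\<lambda>x. 1) A = 0"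
  proof -
    obtain i where "i \<in> A" using assms by auto
    then show ?thesis using DD_zero[of A i "{}" "\<lambda>x. 1"] assms
      unfolding depends_only_on_def by auto
  qed
  have eq: "\<And>T. T \<in> Pow A \<Longrightarrow> smax (pt T) A = 1 - (if T = {} then 1 else 0)"
  proof -
    fix T assume T: "T \<in> Pow A"
    show "smax (pt T) A = 1 - (if T = {} then 1 else 0)"
    proof (cases "T = {}")
      case True
      then have "pt T ` A = {0}" using assms unfolding pt_def by auto
      then show ?thesis using True by (simp add: smax_def)
    next
      case False
      then have "pt T ` A = {1} \<or> pt T ` A = {0,1}" using T unfolding pt_def by auto
      then show ?thesis using False by (auto simp: smax_def)
    qed
  qed
  have "DD (\<lambda>x. smax x A) A = (\<Sum>T \<in> Pow A. (-1) ^ card T * 1 - (-1) ^ card T * (if T = {} then 1 else 0))"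
    unfolding DD_def by (rule sum.cong) (auto simp: eq right_diff_distrib)
  also have "\<dots> = DD (\<lambda>x. 1) A - (\<Sum>T \<in> Pow A. (-1) ^ card T * (if T = {} then 1 else 0))"
    unfolding DD_def by (simp add: sum_subtractf)
  also have "(\<Sum>T \<in> Pow A. (-1) ^ card T * (if T = {} then 1 else 0)) = (1::real)"
    using assms(1) by (simp add: sum.delta' if_distrib cong: if_cong)
  finally show ?thesis using c by simp
qed

lemma sum_S:
  fixes r d :: nat
  defines "R \<equiv> {A. A \<subseteq> {1..d} \<and> card A = r}"
  shows "(\<Sum>j = 1..(d choose r). smax x (C j r d)) = (\<Sum>A\<in>R. smax x A)"
proof -
  define L where "L = subsets_lex r d"
  have finR: "finite R" unfolding R_def
    by (rule finite_subset[of _ "Pow {1..d}"]) auto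
  have injR: "inj_on sorted_list_of_set R"
    by (rule inj_onI) (metis R_def finite_atLeastAtMost finite_subset mem_Collect_eq sorted_list_of_set.set_sorted_key_list_of_set)
  have setL: "set L = sorted_list_of_set ` R" and dL: "distinct L"
    unfolding L_def subsets_lex_def R_def[symmetric] using finR by auto
  have lenL: "length L = d choose r"
  proof -
    have "length L = card (set L)" using dL by (simp add: distinct_card)
    also have "\<dots> = card R" using setL injR by (simp add: card_image)
    also have "\<dots> = d choose r" unfolding R_def using n_subsets[of "{1..d}" r] by simp
    finally show ?thesis .
  qed
  have "(\<Sum>j = 1..(d choose r). smax x (C j r d)) = (\<Sum>j<length L. smax x (set (L ! j)))"
    unfolding C_def L_def[symmetric] lenL by (simp add: sum.atLeast1_atMost_eq)
  also have "\<dots> = sum_list (map (\<lambda>l. smax x (set l)) L)"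
    by (simp add: sum_list_sum_nth atLeast0LessThan)
  also have "\<dots> = (\<Sum>l\<in>set L. smax x (set l))"
    using dL by (simp add: sum_list_distinct_conv_sum_set)
  also have "\<dots> = (\<Sum>A\<in>R. smax x (set (sorted_list_of_set A)))"
    unfolding setL using injR by (simp add: sum.reindex)
  also have "\<dots> = (\<Sum>A\<in>R. smax x A)"
    by (rule sum.cong) (auto simp: R_def dest: finite_subset[OF _ finite_atLeastAtMost])
  finally show ?thesis .
qed

theorem theorem3:
  fixes d r K :: nat and f :: "nat \<Rightarrow> (nat \<Rightarrow> real) \<Rightarrow> real"
  assumes "d \<ge> 1" and "1 \<le> r" and "r \<le> d"
    and "order_r_decomposition r d (\<lambda>x. S x r d) f K"
  shows "K \<ge> d choose r"
proof -
  define R where "R = {A. A \<subseteq> {1..d} \<and> card A = r}"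
  define N where "N = d choose r"
  have finR: "finite R" unfolding R_def
    by (rule finite_subset[of _ "Pow {1..d}"]) auto
  have cardR: "card R = N" unfolding R_def N_def using n_subsets[of "{1..d}" r] by simp
  have Npos: "N > 0" unfolding N_def using assms(3) by simp
  have Sx: "(\<lambda>x. S x r d) = (\<lambda>x. (1 / real N) * (\<Sum>A\<in>R. smax x A))"
    using sum_S[where d=d and r=r] by (simp add: S_def N_def R_def)
  have dec: "(\<lambda>x. S x r d) = (\<lambda>x. \<Sum>k = 1..K. f k x)"
    using assms(4) unfolding order_r_decomposition_def by auto
  have "\<forall>k\<in>{1..K}. \<exists>A. A \<subseteq> {1..d} \<and> card A = r \<and> depends_only_on (f k) A"
    using assms(4) unfolding order_r_decomposition_def by blast
  then have "\<exists>B. \<forall>k\<in>{1..K}. B k \<subseteq> {1..d} \<and> card (B k) = r \<and> depends_only_on (f k) (B k)"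
    by (rule bchoice)
  then obtain B where B0: "\<forall>k\<in>{1..K}. B k \<subseteq> {1..d} \<and> card (B k) = r \<and> depends_only_on (f k) (B k)"
    by blast
  have B: "\<And>k. k \<in> {1..K} \<Longrightarrow> B k \<subseteq> {1..d} \<and> card (B k) = r \<and> depends_only_on (f k) (B k)"
    using B0 by blast
  have cover: "R \<subseteq> B ` {1..K}"
  proof
    fix A0 assume A0: "A0 \<in> R"
    have finA0: "finite A0" using A0 unfolding R_def by (auto dest: finite_subset[OF _ finite_atLeastAtMost])
    have neA0: "A0 \<noteq> {}" using A0 assms(2) unfolding R_def by auto
    have other: "DD (\<lambda>x. smax x A) A0 = (if A = A0 then -1 else 0)" if A: "A \<in> R" for A
    proof (cases "A = A0")
      case True
      then show ?thesis using DD_smax_self finA0 neA0 by simp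
    next
      case False
      have finA: "finite A" using A unfolding R_def by (auto dest: finite_subset[OF _ finite_atLeastAtMost])
      have "\<not> A0 \<subseteq> A"
      proof
        assume "A0 \<subseteq> A"
        then have "A0 = A" using card_subset_eq[OF finA] A A0 unfolding R_def by auto
        then show False using False by simp
      qed
      then obtain i where "i \<in> A0" "i \<notin> A" by auto
      then show ?thesis using DD_zero[OF finA0 _ _ smax_dep] False by simp
    qed
    have "DD (\<lambda>x. S x r d) A0 = (1 / real N) * (\<Sum>A\<in>R. DD (\<lambda>x. smax x A) A0)"
      unfolding Sx DD_cmult[of "1 / real N" "\<lambda>x. \<Sum>A\<in>R. smax x A"] DD_sum by (rule refl)
    also have "(\<Sum>A\<in>R. DD (\<lambda>x. smax x A) A0) = (\<Sum>A\<in>R. if A = A0 then -1 else 0)"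
      using other by (rule sum.cong[OF refl])
    also have "\<dots> = -1" using finR A0 by (simp add: sum.delta')
    finally have "DD (\<lambda>x. S x r d) A0 \<noteq> 0" using Npos by simp
    then have "(\<Sum>k = 1..K. DD (f k) A0) \<noteq> 0" unfolding dec DD_sum .
    then obtain k where k: "k \<in> {1..K}" "DD (f k) A0 \<noteq> 0"
    proof -
      assume H: "(\<Sum>k = 1..K. DD (f k) A0) \<noteq> 0"
      assume G: "\<And>k. k \<in> {1..K} \<Longrightarrow> DD (f k) A0 \<noteq> 0 \<Longrightarrow> thesis"
      show thesis
      proof (rule ccontr)
        assume "\<not> thesis"
        then have "\<forall>k\<in>{1..K}. DD (f k) A0 = 0" using G by blast
        then have "(\<Sum>k = 1..K. DD (f k) A0) = 0" by (rule sum.neutral)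
        then show False using H by simp
      qed
    qed
    have "A0 \<subseteq> B k"
    proof (rule ccontr)
      assume "\<not> A0 \<subseteq> B k"
      then obtain i where "i \<in> A0" "i \<notin> B k" by auto
      then have "DD (f k) A0 = 0" using B[OF k(1)] by (simp add: DD_zero[OF finA0])
      then show False using k by simp
    qed
    moreover have "finite (B k)" "card (B k) = r" using B[OF k(1)] by (auto dest: finite_subset[OF _ finite_atLeastAtMost])
    moreover have "card A0 = r" using A0 R_def by simp
    ultimately have "A0 = B k" using card_subset_eq[of "B k" A0] by simp
    then show "A0 \<in> B ` {1..K}" using k by auto
  qed
  have "N \<le> card (B ` {1..K})" using card_mono[OF _ cover] cardR by simp
  also have "\<dots> \<le> K" using card_image_le[of "{1..K}" B] by simp
  finally show ?thesis unfolding N_def .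
qed

end
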